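(* For all integers $a, b \ge 2$, $R_\mathrm{cyc}(C_a^\mathrm{mon}, C_b^\mathrm{mon}) = 2ab - 3a - 3b + 6$.
   Context: All graphs are finite, simple and undirected, and a graph of order $n$ has vertex set $\{0,1,\ldots,n-1\}$; $K_n$ is the complete graph on $\{0,\ldots,n-1\}$. A $2$-edge-coloring of $K_n$ assigns each edge a color in $\{1,2\}$. An embedding of $H$ in color $j$ is an injective map $\varphi\colon V(H)\to V(K_n)$ such that every edge $uv$ of $H$ goes to an edge $\{\varphi(u),\varphi(v)\}$ of color $j$; it is increasing up to a cyclic permutation if there exists $t\in V(H)$ such that $(\varphi(t),\ldots,\varphi(|H|-1),\varphi(0),\ldots,\varphi(t-1))$ is increasing. $R_\mathrm{cyc}(H_1,H_2)$ is the smallest $n$ such that every $2$-edge-coloring of $K_n$ admits an embedding of $H_1$ in color $1$ or of $H_2$ in color $2$ that is increasing up to a cyclic permutation. For $n\ge3$ the monotone cycle $C_n^\mathrm{mon}$ has edges $\{i,i+1\}$ ($0\le i\le n-2$) and $\{0,n-1\}$; by convention $C_2^\mathrm{mon}=K_2$. *)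

theory Defs
  imports Main
begin

text \<open>A graph of order k: vertex set {0..<k}, edges are 2-element subsets of it.\<close>
type_synonym graph = "nat \<times> nat set set"

definition order :: "graph \<Rightarrow> nat" where "order H = fst H"
definition edges :: "graph \<Rightarrow> nat set set" where "edges H = snd H"

text \<open>Monotone cycle C_n^mon (n \<ge> 3); by convention C_2^mon = K_2.\<close>
definition C_mon :: "nat \<Rightarrow> graph" where
  "C_mon n = (if n = 2 then (2, {{0, 1}})
              else (n, {{i, i + 1} | i. i + 2 \<le> n} \<union> {{0, n - 1}}))"

definition Kedges :: "nat \<Rightarrow> nat set set" where
  "Kedges n = {{u, v} | u v. u < n \<and> v < n \<and> u \<noteq> v}"

definition two_coloring :: "nat \<Rightarrow> (nat set \<Rightarrow> nat) \<Rightarrow> bool" where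
  "two_coloring n c \<longleftrightarrow> (\<forall>e \<in> Kedges n. c e \<in> {1, 2})"

definition embedding :: "nat \<Rightarrow> (nat set \<Rightarrow> nat) \<Rightarrow> nat \<Rightarrow> graph \<Rightarrow> (nat \<Rightarrow> nat) \<Rightarrow> bool" where
  "embedding n c j H \<phi> \<longleftrightarrow>
     inj_on \<phi> {0..<order H} \<and> \<phi> ` {0..<order H} \<subseteq> {0..<n} \<and>
     (\<forall>e \<in> edges H. c (\<phi> ` e) = j)"

definition cyc_increasing :: "graph \<Rightarrow> (nat \<Rightarrow> nat) \<Rightarrow> bool" where
  "cyc_increasing H \<phi> \<longleftrightarrow>
     (\<exists>t < order H. \<forall>i j. i < j \<and> j < order H \<longrightarrow>
        \<phi> ((t + i) mod order H) < \<phi> ((t + j) mod order H))"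

definition cyc_arrows :: "nat \<Rightarrow> graph \<Rightarrow> graph \<Rightarrow> bool" where
  "cyc_arrows n H1 H2 \<longleftrightarrow>
     (\<forall>c. two_coloring n c \<longrightarrow>
        (\<exists>\<phi>. embedding n c 1 H1 \<phi> \<and> cyc_increasing H1 \<phi>) \<or>
        (\<exists>\<phi>. embedding n c 2 H2 \<phi> \<and> cyc_increasing H2 \<phi>))"

definition R_cyc :: "graph \<Rightarrow> graph \<Rightarrow> nat" where
  "R_cyc H1 H2 = (LEAST n. cyc_arrows n H1 H2)"

end

theory Submission
  imports Defs
begin


definition mono_cyc :: "nat \<Rightarrow> (nat set \<Rightarrow> nat) \<Rightarrow> nat \<Rightarrow> nat \<Rightarrow> bool" where
  "mono_cyc n c j k \<longleftrightarrow> (\<exists>y. (\<forall>i<k. y i < n) \<and>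
     (\<forall>i. Suc i < k \<longrightarrow> y i < y (Suc i) \<and> c {y i, y (Suc i)} = j) \<and> c {y 0, y (k - 1)} = j)"

lemma chain_less:
  assumes "\<forall>i. Suc i < k \<longrightarrow> (y::nat\<Rightarrow>nat) i < y (Suc i)" "i < j" "j < k"
  shows "y i < y j"
  using assms(2,3)
proof (induction j)
  case 0 then show ?case by simp
next
  case (Suc j)
  then show ?case using assms(1) by (metis less_Suc_eq less_trans Suc_lessD)
qed

lemma C_mon_eq:
  assumes "k \<ge> 2"
  shows "order (C_mon k) = k" "edges (C_mon k) = {{i, i + 1} | i. i + 2 \<le> k} \<union> {{0, k - 1}}"
proof -
  show "order (C_mon k) = k" by (simp add: C_mon_def order_def)
  show "edges (C_mon k) = {{i, i + 1} | i. i + 2 \<le> k} \<union> {{0, k - 1}}"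
  proof (cases "k = 2")
    case True
    have "{{i, i + 1} | i::nat. i + 2 \<le> 2} = {{0,1}}" by auto
    then show ?thesis using True by (simp add: C_mon_def edges_def)
  next
    case False
    then show ?thesis by (simp add: C_mon_def edges_def)
  qed
qed

lemma emb_to_cyc:
  assumes k: "k \<ge> 2" and emb: "embedding n c j (C_mon k) \<phi>" and ci: "cyc_increasing (C_mon k) \<phi>"
  shows "mono_cyc n c j k"
proof -
  note ce = C_mon_eq[OF k]
  obtain t where t: "t < k" and inc: "\<forall>i j. i < j \<and> j < k \<longrightarrow> \<phi> ((t + i) mod k) < \<phi> ((t + j) mod k)"
    using ci unfolding cyc_increasing_def ce by blast
  have img: "\<phi> ` {0..<k} \<subseteq> {0..<n}" and ed: "\<forall>e \<in> edges (C_mon k). c (\<phi> ` e) = j"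
    using emb unfolding embedding_def ce by auto
  define y where "y i = \<phi> ((t + i) mod k)" for i
  have "\<forall>i<k. y i < n"
  proof (intro allI impI)
    fix i assume "i < k"
    have "(t + i) mod k \<in> {0..<k}" using k by simp
    then show "y i < n" using img unfolding y_def by (meson atLeastLessThan_iff image_subset_iff)
  qed
  moreover have "\<forall>i. Suc i < k \<longrightarrow> y i < y (Suc i) \<and> c {y i, y (Suc i)} = j"
  proof (intro allI impI conjI)
    fix i assume i: "Suc i < k"
    then show "y i < y (Suc i)" using inc[rule_format, of i "Suc i"] unfolding y_def by simp
    define m where "m = (t + i) mod k"
    have mk: "m < k" using k unfolding m_def by simp
    have suc: "(t + Suc i) mod k = (if Suc m = k then 0 else Suc m)"
      unfolding m_def by (simp add: mod_Suc)
    show "c {y i, y (Suc i)} = j"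
    proof (cases "Suc m = k")
      case True
      have "{0, k - 1} \<in> edges (C_mon k)" using ce by simp
      then have cc: "c (\<phi> ` {0, k-1}) = j" using ed by blast
      have e1: "(t+i) mod k = k - 1" using True m_def by simp
      have e2: "(t + Suc i) mod k = 0" using suc True by simp
      have "y i = \<phi> (k - 1)" unfolding y_def e1 by (rule refl)
      moreover have "y (Suc i) = \<phi> 0" unfolding y_def e2 by (rule refl)
      ultimately have "\<phi> ` {0, k-1} = {y i, y (Suc i)}" by auto
      then show ?thesis using cc by simp
    next
      case False
      have "{m, m + 1} \<in> edges (C_mon k)" using ce False mk by auto
      then have cc: "c (\<phi> ` {m, m+1}) = j" using ed by blast
      have e2: "(t + Suc i) mod k = m + 1" using suc False by simp
      have "y i = \<phi> m" unfolding y_def m_def by (rule refl)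
      moreover have "y (Suc i) = \<phi> (m+1)" unfolding y_def e2 by (rule refl)
      ultimately have "\<phi> ` {m, m+1} = {y i, y (Suc i)}" by auto
      then show ?thesis using cc by simp
    qed
  qed
  moreover have "c {y 0, y (k - 1)} = j"
  proof (cases "t = 0")
    case True
    have "{0, k - 1} \<in> edges (C_mon k)" using ce by simp
    then have "c (\<phi> ` {0, k-1}) = j" using ed by blast
    moreover have "\<phi> ` {0, k-1} = {y 0, y (k - 1)}" unfolding y_def using True k by auto
    ultimately show ?thesis by simp
  next
    case False
    have t2: "t - 1 + 2 \<le> k" using False t by simp
    have "{t - 1, t - 1 + 1} \<in> {{i, i + 1} | i. i + 2 \<le> k}" using t2 by blast
    then have "{t - 1, t - 1 + 1} \<in> edges (C_mon k)" using ce by simp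
    then have cc: "c (\<phi> ` {t - 1, t - 1 + 1}) = j" using ed by blast
    have md: "(t + (k - 1)) mod k = t - 1"
    proof -
      have e: "t + (k - 1) = (t - 1) + k" using False k by simp
      have "((t - 1) + k) mod k = t - 1" using t by simp
      then show ?thesis by (simp only: e)
    qed
    have "y 0 = \<phi> t" unfolding y_def using t by simp
    moreover have "y (k - 1) = \<phi> (t - 1)" unfolding y_def md by (rule refl)
    moreover have "t - 1 + 1 = t" using False by simp
    ultimately have "\<phi> ` {t - 1, t - 1 + 1} = {y 0, y (k - 1)}" by auto
    then show ?thesis using cc by simp
  qed
  ultimately show ?thesis unfolding mono_cyc_def by blast
qed

lemma cyc_to_emb:
  assumes k: "k \<ge> 2" and mc: "mono_cyc n c j k"
  shows "\<exists>\<phi>. embedding n c j (C_mon k) \<phi> \<and> cyc_increasing (C_mon k) \<phi>"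
proof -
  note ce = C_mon_eq[OF k]
  obtain y where yn: "\<forall>i<k. y i < n" and yc: "\<forall>i. Suc i < k \<longrightarrow> y i < y (Suc i) \<and> c {y i, y (Suc i)} = j"
    and cl: "c {y 0, y (k - 1)} = j" using mc unfolding mono_cyc_def by blast
  have lt: "y i < y i'" if "i < i'" "i' < k" for i i'
    using chain_less[of k y i i'] yc that by blast
  have "inj_on y {0..<k}"
  proof (rule inj_onI)
    fix u v assume "u \<in> {0..<k}" "v \<in> {0..<k}" "y u = y v"
    then show "u = v" using lt by (metis atLeastLessThan_iff less_irrefl nat_neq_iff)
  qed
  moreover have "y ` {0..<k} \<subseteq> {0..<n}" using yn by auto
  moreover have "\<forall>e \<in> edges (C_mon k). c (y ` e) = j"
  proof
    fix e assume "e \<in> edges (C_mon k)"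
    then consider (a) i where "e = {i, i+1}" "i + 2 \<le> k" | (b) "e = {0, k - 1}" using ce by auto
    then show "c (y ` e) = j"
    proof cases
      case a then show ?thesis using yc[rule_format, of i] by simp
    next
      case b then show ?thesis using cl by simp
    qed
  qed
  moreover have "cyc_increasing (C_mon k) y"
  proof -
    have "\<forall>i j. i < j \<and> j < k \<longrightarrow> y ((0 + i) mod k) < y ((0 + j) mod k)"
      using lt by simp
    then show ?thesis unfolding cyc_increasing_def ce using k by (intro exI[of _ 0]) simp
  qed
  ultimately show ?thesis unfolding embedding_def ce by blast
qed



lemma path_bound:
  fixes X :: "nat set" and c :: "nat set \<Rightarrow> nat"
  assumes "finite X"
    and "\<forall>u\<in>X. \<forall>v\<in>X. u \<noteq> v \<longrightarrow> c {u,v} = j \<or> c {u,v} = j'"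
    and "\<not> (\<exists>y. (\<forall>i<p. y i \<in> X) \<and> (\<forall>i. Suc i < p \<longrightarrow> y i < y (Suc i) \<and> c {y i, y (Suc i)} = j))"
    and "\<forall>S\<subseteq>X. (\<forall>u\<in>S. \<forall>v\<in>S. u \<noteq> v \<longrightarrow> c {u,v} = j') \<longrightarrow> card S < q"
  shows "card X \<le> (p - 1) * (q - 1)"
  using assms
proof (induction p arbitrary: X)
  case 0
  then show ?case by simp
next
  case (Suc p)
  show ?case
  proof (cases "p = 0")
    case True
    have "X = {}"
    proof (rule ccontr)
      assume "X \<noteq> {}"
      then obtain x where "x \<in> X" by blast
      then have "\<exists>y. (\<forall>i<Suc p. y i \<in> X) \<and> (\<forall>i. Suc i < Suc p \<longrightarrow> y i < y (Suc i) \<and> c {y i, y (Suc i)} = j)"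
        using True by (intro exI[of _ "\<lambda>_. x"]) simp
      then show False using Suc.prems(3) by blast
    qed
    then show ?thesis by simp
  next
    case False
    define E where "E = {v\<in>X. \<not>(\<exists>u\<in>X. u < v \<and> c {u,v} = j)}"
    have EX: "E \<subseteq> X" unfolding E_def by blast
    have Eclq: "\<forall>u\<in>E. \<forall>v\<in>E. u \<noteq> v \<longrightarrow> c {u,v} = j'"
    proof (intro ballI impI)
      fix u v assume u: "u \<in> E" and v: "v \<in> E" and uv: "u \<noteq> v"
      show "c {u,v} = j'"
      proof (cases "u < v")
        case True
        then have "c {u,v} \<noteq> j" using u v unfolding E_def by blast
        then show ?thesis using Suc.prems(2) u v uv EX by blast
      next
        case False
        then have "v < u" using uv by simp
        then have "c {v,u} \<noteq> j" using u v unfolding E_def by blast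
        then have "c {u,v} \<noteq> j" by (simp add: insert_commute)
        then show ?thesis using Suc.prems(2) u v uv EX by blast
      qed
    qed
    have cE: "card E < q" using Suc.prems(4) EX Eclq by simp
    have np: "\<not> (\<exists>y. (\<forall>i<p. y i \<in> X - E) \<and> (\<forall>i. Suc i < p \<longrightarrow> y i < y (Suc i) \<and> c {y i, y (Suc i)} = j))"
    proof
      assume "\<exists>y. (\<forall>i<p. y i \<in> X - E) \<and> (\<forall>i. Suc i < p \<longrightarrow> y i < y (Suc i) \<and> c {y i, y (Suc i)} = j)"
      then obtain y where y1: "\<forall>i<p. y i \<in> X - E" and y2: "\<forall>i. Suc i < p \<longrightarrow> y i < y (Suc i) \<and> c {y i, y (Suc i)} = j"
        by blast
      have "y 0 \<in> X - E" using y1 False by simp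
      then obtain u where u: "u \<in> X" "u < y 0" "c {u, y 0} = j" unfolding E_def by blast
      define z where "z i = (if i = 0 then u else y (i - 1))" for i
      have "\<forall>i<Suc p. z i \<in> X"
      proof (intro allI impI)
        fix i assume "i < Suc p"
        then show "z i \<in> X" using u y1 unfolding z_def by (cases i) auto
      qed
      moreover have "\<forall>i. Suc i < Suc p \<longrightarrow> z i < z (Suc i) \<and> c {z i, z (Suc i)} = j"
      proof (intro allI impI)
        fix i assume "Suc i < Suc p"
        then show "z i < z (Suc i) \<and> c {z i, z (Suc i)} = j"
          using u y2 unfolding z_def by (cases i) auto
      qed
      ultimately show False using Suc.prems(3) by blast
    qed
    have f: "finite (X - E)" using Suc.prems(1) by (rule finite_Diff)
    have col': "\<forall>u\<in>X - E. \<forall>v\<in>X - E. u \<noteq> v \<longrightarrow> c {u,v} = j \<or> c {u,v} = j'"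
      using Suc.prems(2) by blast
    have ncl': "\<forall>S\<subseteq>X - E. (\<forall>u\<in>S. \<forall>v\<in>S. u \<noteq> v \<longrightarrow> c {u,v} = j') \<longrightarrow> card S < q"
    proof (intro allI impI)
      fix S assume S1: "S \<subseteq> X - E" and S2: "\<forall>u\<in>S. \<forall>v\<in>S. u \<noteq> v \<longrightarrow> c {u,v} = j'"
      have "S \<subseteq> X" using S1 by blast
      then show "card S < q" using S2 Suc.prems(4) by simp
    qed
    have "card (X - E) \<le> (p - 1) * (q - 1)"
      by (rule Suc.IH[OF f col' np ncl'])
    moreover have "card X = card E + card (X - E)"
    proof -
      have "finite E" using EX Suc.prems(1) finite_subset by blast
      then have "card (X - E) = card X - card E" using EX by (simp add: card_Diff_subset)
      moreover have "card E \<le> card X" using EX Suc.prems(1) by (simp add: card_mono)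
      ultimately show ?thesis by simp
    qed
    ultimately have "card X \<le> (q - 1) + (p - 1) * (q - 1)" using cE by linarith
    also have "\<dots> = p * (q - 1)"
    proof -
      obtain p' where "p = Suc p'" using False by (cases p) auto
      then show ?thesis by simp
    qed
    finally show ?thesis by simp
  qed
qed

lemma clique_cyc:
  fixes S :: "nat set"
  assumes "finite S" "card S \<ge> k" "k \<ge> 2" "S \<subseteq> {0..<n}"
    and "\<forall>u\<in>S. \<forall>v\<in>S. u \<noteq> v \<longrightarrow> c {u,v} = j"
  shows "mono_cyc n c j k"
proof -
  define xs where "xs = sorted_list_of_set S"
  have s: "sorted_wrt (<) xs" unfolding xs_def by (rule strict_sorted_list_of_set)
  have st: "set xs = S" unfolding xs_def using assms(1) by simp
  have l: "length xs = card S" unfolding xs_def by simp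
  have mem: "xs ! i \<in> S" if "i < k" for i using that assms(2) l st by (metis le_trans less_le_not_le nth_mem)
  have lt: "xs ! i < xs ! i'" if "i < i'" "i' < k" for i i'
    using sorted_wrt_nth_less[OF s that(1)] that assms(2) l by simp
  have "\<forall>i<k. xs ! i < n" using mem assms(4) by (meson atLeastLessThan_iff subsetD)
  moreover have "\<forall>i. Suc i < k \<longrightarrow> xs ! i < xs ! (Suc i) \<and> c {xs ! i, xs ! (Suc i)} = j"
  proof (intro allI impI conjI)
    fix i assume "Suc i < k"
    then show "xs ! i < xs ! (Suc i)" using lt by simp
    then show "c {xs ! i, xs ! (Suc i)} = j" using mem \<open>Suc i < k\<close> assms(5)
      by (metis Suc_lessD less_irrefl)
  qed
  moreover have "c {xs ! 0, xs ! (k - 1)} = j"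
  proof -
    have "xs ! 0 < xs ! (k - 1)" using lt assms(3) by simp
    moreover have "xs ! 0 \<in> S" "xs ! (k - 1) \<in> S" using mem assms(3) by auto
    ultimately show ?thesis using assms(5) by (metis less_irrefl)
  qed
  ultimately show ?thesis unfolding mono_cyc_def by (intro exI[of _ "\<lambda>i. xs ! i"]) blast
qed

lemma path_to_cyc:
  assumes "p \<ge> 1" "\<forall>i<p. y i \<in> X" "\<forall>i. Suc i < p \<longrightarrow> y i < y (Suc i) \<and> c {y i, y (Suc i)} = j"
    and "X \<subseteq> {v. 0 < v \<and> v < n \<and> c {0, v} = j}"
  shows "mono_cyc n c j (Suc p)"
proof -
  define z where "z i = (if i = 0 then 0 else y (i - 1))" for i
  have X: "\<And>i. i < p \<Longrightarrow> 0 < y i \<and> y i < n \<and> c {0, y i} = j" using assms(2,4) by blast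
  have "\<forall>i<Suc p. z i < n"
  proof (intro allI impI)
    fix i assume "i < Suc p"
    then show "z i < n" using X assms(1) unfolding z_def by (cases i) fastforce+
  qed
  moreover have "\<forall>i. Suc i < Suc p \<longrightarrow> z i < z (Suc i) \<and> c {z i, z (Suc i)} = j"
  proof (intro allI impI)
    fix i assume "Suc i < Suc p"
    then show "z i < z (Suc i) \<and> c {z i, z (Suc i)} = j"
      using X assms(3) unfolding z_def by (cases i) auto
  qed
  moreover have "c {z 0, z (Suc p - 1)} = j" using X assms(1) unfolding z_def by simp
  ultimately show ?thesis unfolding mono_cyc_def by blast
qed



definition NB :: "nat \<Rightarrow> nat \<Rightarrow> nat" where "NB a b = (a - 1) * (b - 1)"
definition qq :: "nat \<Rightarrow> nat \<Rightarrow> nat \<Rightarrow> nat" where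
  "qq a b v = (if v < NB a b then v div (a - 1) else (v - NB a b) div (a - 2))"
definition rr :: "nat \<Rightarrow> nat \<Rightarrow> nat \<Rightarrow> nat" where
  "rr a b v = (if v < NB a b then v mod (a - 1) else (v - NB a b) mod (a - 2))"
definition red :: "nat \<Rightarrow> nat \<Rightarrow> nat \<Rightarrow> nat \<Rightarrow> bool" where
  "red a b u v = (if v < NB a b \<or> NB a b \<le> u then rr a b u < rr a b v
     else (qq a b u \<le> qq a b v \<and> rr a b v < rr a b u) \<or> (qq a b v < qq a b u \<and> rr a b u \<le> rr a b v))"
definition col :: "nat \<Rightarrow> nat \<Rightarrow> nat set \<Rightarrow> nat" where
  "col a b e = (if red a b (Min e) (Max e) then 1 else 2)"

lemma col_eq: "u < v \<Longrightarrow> col a b {u, v} = (if red a b u v then 1 else 2)"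
  unfolding col_def by (simp add: min_def max_def)

lemma divmod_facts:
  fixes d x y :: nat
  assumes "0 < d" "x < y"
  shows "x div d \<le> y div d" "y mod d \<le> x mod d \<Longrightarrow> x div d < y div d"
proof -
  show "x div d \<le> y div d" using assms by (simp add: div_le_mono)
  assume h: "y mod d \<le> x mod d"
  show "x div d < y div d"
  proof (rule ccontr)
    assume "\<not> x div d < y div d"
    then have "y div d \<le> x div d" by simp
    then have e1: "d * (y div d) \<le> d * (x div d)" by (rule mult_le_mono2)
    have ey: "y = d * (y div d) + y mod d" by simp
    have ex: "x = d * (x div d) + x mod d" by simp
    have "y \<le> x" using e1 h ey ex by linarith
    then show False using assms by simp
  qed
qed

lemma chain_inc:
  fixes f :: "nat \<Rightarrow> nat"
  assumes "\<forall>i. lo \<le> i \<and> i < hi \<longrightarrow> f i < f (Suc i)"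
  shows "lo \<le> i \<Longrightarrow> i \<le> hi \<Longrightarrow> f lo + (i - lo) \<le> f i"
proof (induction i)
  case 0 then show ?case by simp
next
  case (Suc i)
  show ?case
  proof (cases "lo = Suc i")
    case True then show ?thesis by simp
  next
    case False
    then have "lo \<le> i" "i < hi" using Suc.prems by auto
    then have "f lo + (i - lo) \<le> f i" "f i < f (Suc i)" using Suc.IH assms by auto
    then show ?thesis using \<open>lo \<le> i\<close> by linarith
  qed
qed

lemma chain_dec:
  fixes f :: "nat \<Rightarrow> nat"
  assumes "\<forall>i. lo \<le> i \<and> i < hi \<longrightarrow> f (Suc i) \<le> f i"
  shows "lo \<le> i \<Longrightarrow> i \<le> hi \<Longrightarrow> f i \<le> f lo"
proof (induction i)
  case 0 then show ?case by simp
next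
  case (Suc i)
  show ?case
  proof (cases "lo = Suc i")
    case True then show ?thesis by simp
  next
    case False
    then have "lo \<le> i" "i < hi" using Suc.prems by auto
    then have "f i \<le> f lo" "f (Suc i) \<le> f i" using Suc.IH assms by auto
    then show ?thesis by linarith
  qed
qed

context
  fixes a b :: nat
  assumes a: "a \<ge> 2" and b: "b \<ge> 2"
begin

abbreviation "M \<equiv> NB a b + (a - 2) * (b - 2)"

lemma Bfacts: "v < NB a b \<Longrightarrow> rr a b v < a - 1 \<and> qq a b v < b - 1"
  unfolding rr_def qq_def NB_def using a
  by (simp add: less_mult_imp_div_less mult.commute)

lemma Sfacts: "NB a b \<le> v \<Longrightarrow> v < M \<Longrightarrow> rr a b v < a - 2 \<and> qq a b v < b - 2"
proof -
  assume h: "NB a b \<le> v" "v < M"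
  then have "v - NB a b < (a - 2) * (b - 2)" by simp
  moreover then have "a - 2 > 0" by (metis gr0I mult_is_0 not_less_zero)
  ultimately show ?thesis unfolding rr_def qq_def using h
    by (simp add: less_mult_imp_div_less mult.commute)
qed

lemma BB: "u < v \<Longrightarrow> v < NB a b \<Longrightarrow> qq a b u \<le> qq a b v \<and> (\<not> red a b u v \<longrightarrow> qq a b u < qq a b v \<and> rr a b v \<le> rr a b u) \<and> (red a b u v \<longrightarrow> rr a b u < rr a b v)"
proof -
  assume h: "u < v" "v < NB a b"
  have d: "0 < a - 1" using a by simp
  show ?thesis using h divmod_facts[OF d h(1)] unfolding red_def qq_def rr_def by auto
qed

lemma SS: "NB a b \<le> u \<Longrightarrow> u < v \<Longrightarrow> v < M \<Longrightarrow> qq a b u \<le> qq a b v \<and> (\<not> red a b u v \<longrightarrow> qq a b u < qq a b v \<and> rr a b v \<le> rr a b u) \<and> (red a b u v \<longrightarrow> rr a b u < rr a b v)"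
proof -
  assume h: "NB a b \<le> u" "u < v" "v < M"
  have "v - NB a b < (a - 2) * (b - 2)" using h by simp
  then have d: "0 < a - 2" by (metis gr0I mult_is_0 not_less_zero)
  have h1: "u - NB a b < v - NB a b" using h by simp
  show ?thesis using h divmod_facts[OF d h1] unfolding red_def qq_def rr_def by auto
qed


lemma split_point:
  fixes y :: "nat \<Rightarrow> nat"
  assumes "y 0 < NB a b" "NB a b \<le> y K" "\<And>i j. i \<le> j \<Longrightarrow> j \<le> K \<Longrightarrow> y i \<le> y j"
  obtains k1 where "k1 < K" "\<And>i. i \<le> k1 \<Longrightarrow> y i < NB a b" "\<And>i. Suc k1 \<le> i \<Longrightarrow> i \<le> K \<Longrightarrow> NB a b \<le> y i"
proof -
  define k0 where "k0 = (LEAST i. NB a b \<le> y i)"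
  have k0K: "k0 \<le> K" unfolding k0_def using assms(2) by (rule Least_le)
  have yk0: "NB a b \<le> y k0" unfolding k0_def using assms(2) by (rule LeastI)
  have k0nz: "k0 \<noteq> 0" using yk0 assms(1) by (metis not_le)
  have lt: "y i < NB a b" if "i < k0" for i using not_less_Least[of i "\<lambda>i. NB a b \<le> y i"] that
    unfolding k0_def by simp
  show ?thesis
  proof (rule that[of "k0 - 1"])
    show "k0 - 1 < K" using k0K k0nz by simp
    show "y i < NB a b" if "i \<le> k0 - 1" for i using lt that k0nz by simp
    show "NB a b \<le> y i" if "Suc (k0 - 1) \<le> i" "i \<le> K" for i
      using yk0 assms(3)[of k0 i] that k0nz by simp
  qed
qed

lemma no_red:
  fixes y :: "nat \<Rightarrow> nat"
  assumes yM: "\<forall>i<a. y i < M" and yc: "\<forall>i. Suc i < a \<longrightarrow> y i < y (Suc i) \<and> red a b (y i) (y (Suc i))"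
    and cl: "red a b (y 0) (y (a - 1))"
  shows False
proof -
  define K where "K = a - 1"
  have aK: "a = Suc K" using a unfolding K_def by simp
  have mono: "y i \<le> y j" if "i \<le> j" "j \<le> K" for i j
  proof (cases "i = j")
    case False
    then show ?thesis using chain_less[of a y i j] yc that aK by fastforce
  qed simp
  have yK: "y K < M" using yM aK by simp
  have clK: "red a b (y 0) (y K)" using cl unfolding K_def .
  have st: "y i < y (Suc i) \<and> red a b (y i) (y (Suc i))" if "i < K" for i using yc aK that by simp
  consider (A) "y K < NB a b" | (Bc) "NB a b \<le> y 0" | (C) "y 0 < NB a b" "NB a b \<le> y K" by linarith
  then show False
  proof cases
    case A
    have "\<forall>i. 0 \<le> i \<and> i < K \<longrightarrow> rr a b (y i) < rr a b (y (Suc i))"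
    proof (intro allI impI)
      fix i assume "0 \<le> i \<and> i < K"
      then have "y (Suc i) < NB a b" using mono[of "Suc i" K] A by simp
      then show "rr a b (y i) < rr a b (y (Suc i))" using BB[of "y i" "y (Suc i)"] st \<open>0 \<le> i \<and> i < K\<close> by blast
    qed
    from chain_inc[OF this, of K] have "rr a b (y 0) + K \<le> rr a b (y K)" by simp
    moreover have "rr a b (y K) < a - 1" using Bfacts A by blast
    ultimately show False unfolding K_def by simp
  next
    case Bc
    have "\<forall>i. 0 \<le> i \<and> i < K \<longrightarrow> rr a b (y i) < rr a b (y (Suc i))"
    proof (intro allI impI)
      fix i assume i: "0 \<le> i \<and> i < K"
      then have "NB a b \<le> y i" using mono[of 0 i] Bc by simp
      moreover have "y (Suc i) < M" using yM aK i by simp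
      ultimately show "rr a b (y i) < rr a b (y (Suc i))" using SS[of "y i" "y (Suc i)"] st i by blast
    qed
    from chain_inc[OF this, of K] have "rr a b (y 0) + K \<le> rr a b (y K)" by simp
    moreover have "rr a b (y K) < a - 2" using Sfacts[of "y K"] Bc mono[of 0 K] yK by simp
    ultimately show False unfolding K_def by simp
  next
    case C
    obtain k1 where k1: "k1 < K" and lo: "\<And>i. i \<le> k1 \<Longrightarrow> y i < NB a b"
      and hi: "\<And>i. Suc k1 \<le> i \<Longrightarrow> i \<le> K \<Longrightarrow> NB a b \<le> y i"
      using split_point[of y K] C mono by blast
    have yiM: "y i < M" if "i \<le> K" for i using yM aK that by simp
    have "\<forall>i. 0 \<le> i \<and> i < k1 \<longrightarrow> rr a b (y i) < rr a b (y (Suc i))"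
    proof (intro allI impI)
      fix i assume i: "0 \<le> i \<and> i < k1"
      then have "y (Suc i) < NB a b" using lo by simp
      then show "rr a b (y i) < rr a b (y (Suc i))" using BB[of "y i" "y (Suc i)"] st[of i] i k1 by simp
    qed
    from chain_inc[OF this, of k1] have F1: "rr a b (y 0) + k1 \<le> rr a b (y k1)" by simp
    have "\<forall>i. Suc k1 \<le> i \<and> i < K \<longrightarrow> rr a b (y i) < rr a b (y (Suc i))"
    proof (intro allI impI)
      fix i assume i: "Suc k1 \<le> i \<and> i < K"
      then have "NB a b \<le> y i" using hi by simp
      then show "rr a b (y i) < rr a b (y (Suc i))" using SS[of "y i" "y (Suc i)"] st[of i] i yiM[of "Suc i"] by simp
    qed
    from chain_inc[OF this, of K] have F2: "rr a b (y (Suc k1)) + (K - Suc k1) \<le> rr a b (y K)" using k1 by simp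
    have F3: "qq a b (y 0) \<le> qq a b (y k1)"
    proof (cases "k1 = 0")
      case False
      then have "y 0 < y k1" using chain_less[of a y 0 k1] yc aK k1 by simp
      then show ?thesis using BB[of "y 0" "y k1"] lo[of k1] by simp
    qed simp
    have F4: "qq a b (y (Suc k1)) \<le> qq a b (y K)"
    proof (cases "Suc k1 = K")
      case False
      then have "y (Suc k1) < y K" using chain_less[of a y "Suc k1" K] yc aK k1 by simp
      then show ?thesis using SS[of "y (Suc k1)" "y K"] hi[of "Suc k1"] k1 yK by simp
    qed simp
    have F5: "red a b (y k1) (y (Suc k1))" using st[of k1] k1 by simp
    have nb1: "\<not> y (Suc k1) < NB a b" "\<not> NB a b \<le> y k1" using lo[of k1] hi[of "Suc k1"] k1 by auto
    have F5': "(qq a b (y k1) \<le> qq a b (y (Suc k1)) \<and> rr a b (y (Suc k1)) < rr a b (y k1)) \<or>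
               (qq a b (y (Suc k1)) < qq a b (y k1) \<and> rr a b (y k1) \<le> rr a b (y (Suc k1)))"
      using F5 nb1 unfolding red_def by simp
    have nb2: "\<not> y K < NB a b" "\<not> NB a b \<le> y 0" using C by auto
    have F6': "(qq a b (y 0) \<le> qq a b (y K) \<and> rr a b (y K) < rr a b (y 0)) \<or>
               (qq a b (y K) < qq a b (y 0) \<and> rr a b (y 0) \<le> rr a b (y K))"
      using clK nb2 unfolding red_def by simp
    have b1: "rr a b (y k1) < a - 1" using Bfacts lo[of k1] by blast
    have b2: "rr a b (y K) < a - 2" using Sfacts[of "y K"] C yK by simp
    show False using F1 F2 F3 F4 F5' F6' b1 b2 k1 unfolding K_def by linarith
  qed
qed


lemma no_blue:
  fixes y :: "nat \<Rightarrow> nat"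
  assumes yM: "\<forall>i<b. y i < M" and yc: "\<forall>i. Suc i < b \<longrightarrow> y i < y (Suc i) \<and> \<not> red a b (y i) (y (Suc i))"
    and cl: "\<not> red a b (y 0) (y (b - 1))"
  shows False
proof -
  define K where "K = b - 1"
  have bK: "b = Suc K" using b unfolding K_def by simp
  have mono: "y i \<le> y j" if "i \<le> j" "j \<le> K" for i j
  proof (cases "i = j")
    case False
    then show ?thesis using chain_less[of b y i j] yc that bK by fastforce
  qed simp
  have yK: "y K < M" using yM bK by simp
  have clK: "\<not> red a b (y 0) (y K)" using cl unfolding K_def .
  have st: "y i < y (Suc i) \<and> \<not> red a b (y i) (y (Suc i))" if "i < K" for i using yc bK that by simp
  consider (A) "y K < NB a b" | (Bc) "NB a b \<le> y 0" | (C) "y 0 < NB a b" "NB a b \<le> y K" by linarith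
  then show False
  proof cases
    case A
    have "\<forall>i. 0 \<le> i \<and> i < K \<longrightarrow> qq a b (y i) < qq a b (y (Suc i))"
    proof (intro allI impI)
      fix i assume "0 \<le> i \<and> i < K"
      then have "y (Suc i) < NB a b" using mono[of "Suc i" K] A by simp
      then show "qq a b (y i) < qq a b (y (Suc i))" using BB[of "y i" "y (Suc i)"] st \<open>0 \<le> i \<and> i < K\<close> by blast
    qed
    from chain_inc[OF this, of K] have "qq a b (y 0) + K \<le> qq a b (y K)" by simp
    moreover have "qq a b (y K) < b - 1" using Bfacts A by blast
    ultimately show False unfolding K_def by simp
  next
    case Bc
    have "\<forall>i. 0 \<le> i \<and> i < K \<longrightarrow> qq a b (y i) < qq a b (y (Suc i))"
    proof (intro allI impI)
      fix i assume i: "0 \<le> i \<and> i < K"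
      then have "NB a b \<le> y i" using mono[of 0 i] Bc by simp
      moreover have "y (Suc i) < M" using yM bK i by simp
      ultimately show "qq a b (y i) < qq a b (y (Suc i))" using SS[of "y i" "y (Suc i)"] st i by blast
    qed
    from chain_inc[OF this, of K] have "qq a b (y 0) + K \<le> qq a b (y K)" by simp
    moreover have "qq a b (y K) < b - 2" using Sfacts[of "y K"] Bc mono[of 0 K] yK by simp
    ultimately show False unfolding K_def by simp
  next
    case C
    obtain k1 where k1: "k1 < K" and lo: "\<And>i. i \<le> k1 \<Longrightarrow> y i < NB a b"
      and hi: "\<And>i. Suc k1 \<le> i \<Longrightarrow> i \<le> K \<Longrightarrow> NB a b \<le> y i"
      using split_point[of y K] C mono by blast
    have yiM: "y i < M" if "i \<le> K" for i using yM bK that by simp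
    have "\<forall>i. 0 \<le> i \<and> i < k1 \<longrightarrow> qq a b (y i) < qq a b (y (Suc i))"
    proof (intro allI impI)
      fix i assume i: "0 \<le> i \<and> i < k1"
      then have "y (Suc i) < NB a b" using lo by simp
      then show "qq a b (y i) < qq a b (y (Suc i))" using BB[of "y i" "y (Suc i)"] st[of i] i k1 by simp
    qed
    from chain_inc[OF this, of k1] have F1: "qq a b (y 0) + k1 \<le> qq a b (y k1)" by simp
    have "\<forall>i. Suc k1 \<le> i \<and> i < K \<longrightarrow> qq a b (y i) < qq a b (y (Suc i))"
    proof (intro allI impI)
      fix i assume i: "Suc k1 \<le> i \<and> i < K"
      then have "NB a b \<le> y i" using hi by simp
      then show "qq a b (y i) < qq a b (y (Suc i))" using SS[of "y i" "y (Suc i)"] st[of i] i yiM[of "Suc i"] by simp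
    qed
    from chain_inc[OF this, of K] have F2: "qq a b (y (Suc k1)) + (K - Suc k1) \<le> qq a b (y K)" using k1 by simp
    have "\<forall>i. 0 \<le> i \<and> i < k1 \<longrightarrow> rr a b (y (Suc i)) \<le> rr a b (y i)"
    proof (intro allI impI)
      fix i assume i: "0 \<le> i \<and> i < k1"
      then have "y (Suc i) < NB a b" using lo by simp
      then show "rr a b (y (Suc i)) \<le> rr a b (y i)" using BB[of "y i" "y (Suc i)"] st[of i] i k1 by simp
    qed
    from chain_dec[OF this, of k1] have F3: "rr a b (y k1) \<le> rr a b (y 0)" by simp
    have "\<forall>i. Suc k1 \<le> i \<and> i < K \<longrightarrow> rr a b (y (Suc i)) \<le> rr a b (y i)"
    proof (intro allI impI)
      fix i assume i: "Suc k1 \<le> i \<and> i < K"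
      then have "NB a b \<le> y i" using hi by simp
      then show "rr a b (y (Suc i)) \<le> rr a b (y i)" using SS[of "y i" "y (Suc i)"] st[of i] i yiM[of "Suc i"] by simp
    qed
    from chain_dec[OF this, of K] have F4: "rr a b (y K) \<le> rr a b (y (Suc k1))" using k1 by simp
    have F5: "\<not> red a b (y k1) (y (Suc k1))" using st[of k1] k1 by simp
    have nb1: "\<not> y (Suc k1) < NB a b" "\<not> NB a b \<le> y k1" using lo[of k1] hi[of "Suc k1"] k1 by auto
    have F5': "\<not> ((qq a b (y k1) \<le> qq a b (y (Suc k1)) \<and> rr a b (y (Suc k1)) < rr a b (y k1)) \<or>
               (qq a b (y (Suc k1)) < qq a b (y k1) \<and> rr a b (y k1) \<le> rr a b (y (Suc k1))))"
      using F5 nb1 unfolding red_def by simp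
    have nb2: "\<not> y K < NB a b" "\<not> NB a b \<le> y 0" using C by auto
    have F6': "\<not> ((qq a b (y 0) \<le> qq a b (y K) \<and> rr a b (y K) < rr a b (y 0)) \<or>
               (qq a b (y K) < qq a b (y 0) \<and> rr a b (y 0) \<le> rr a b (y K)))"
      using clK nb2 unfolding red_def by simp
    have b1: "qq a b (y k1) < b - 1" using Bfacts lo[of k1] by blast
    have b2: "qq a b (y K) < b - 2" using Sfacts[of "y K"] C yK by simp
    show False using F1 F2 F3 F4 F5' F6' b1 b2 k1 unfolding K_def by linarith
  qed
qed

lemma lower:
  assumes "n \<le> M"
  shows "\<not> cyc_arrows n (C_mon a) (C_mon b)"
proof
  assume ca: "cyc_arrows n (C_mon a) (C_mon b)"
  have tc: "two_coloring n (col a b)" unfolding two_coloring_def col_def by simp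
  have "(\<exists>\<phi>. embedding n (col a b) 1 (C_mon a) \<phi> \<and> cyc_increasing (C_mon a) \<phi>) \<or>
        (\<exists>\<phi>. embedding n (col a b) 2 (C_mon b) \<phi> \<and> cyc_increasing (C_mon b) \<phi>)"
    using ca tc unfolding cyc_arrows_def by blast
  then have "mono_cyc n (col a b) 1 a \<or> mono_cyc n (col a b) 2 b" using emb_to_cyc a b by blast
  then show False
  proof
    assume "mono_cyc n (col a b) 1 a"
    then obtain y where yn: "\<forall>i<a. y i < n" and yc: "\<forall>i. Suc i < a \<longrightarrow> y i < y (Suc i) \<and> col a b {y i, y (Suc i)} = 1"
      and cl: "col a b {y 0, y (a - 1)} = 1" unfolding mono_cyc_def by blast
    have "\<forall>i<a. y i < M" using yn assms by (meson less_le_trans)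
    moreover have "\<forall>i. Suc i < a \<longrightarrow> y i < y (Suc i) \<and> red a b (y i) (y (Suc i))"
      using yc col_eq by (metis numeral_One numeral_eq_iff semiring_norm(85))
    moreover have "red a b (y 0) (y (a - 1))"
    proof -
      have "y 0 < y (a - 1)" using chain_less[of a y 0 "a - 1"] yc a by simp
      then show ?thesis using cl col_eq by (metis numeral_One numeral_eq_iff semiring_norm(85))
    qed
    ultimately show False by (rule no_red)
  next
    assume "mono_cyc n (col a b) 2 b"
    then obtain y where yn: "\<forall>i<b. y i < n" and yc: "\<forall>i. Suc i < b \<longrightarrow> y i < y (Suc i) \<and> col a b {y i, y (Suc i)} = 2"
      and cl: "col a b {y 0, y (b - 1)} = 2" unfolding mono_cyc_def by blast
    have "\<forall>i<b. y i < M" using yn assms by (meson less_le_trans)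
    moreover have "\<forall>i. Suc i < b \<longrightarrow> y i < y (Suc i) \<and> \<not> red a b (y i) (y (Suc i))"
      using yc col_eq by (metis numeral_One numeral_eq_iff semiring_norm(85))
    moreover have "\<not> red a b (y 0) (y (b - 1))"
    proof -
      have "y 0 < y (b - 1)" using chain_less[of b y 0 "b - 1"] yc b by simp
      then show ?thesis using cl col_eq by (metis numeral_One numeral_eq_iff semiring_norm(85))
    qed
    ultimately show False by (rule no_blue)
  qed
qed

end



lemma upper:
  assumes a: "a \<ge> 2" and b: "b \<ge> 2"
  shows "cyc_arrows ((a-1)*(b-1) + (a-2)*(b-2) + 1) (C_mon a) (C_mon b)"
proof -
  define N where "N = (a-1)*(b-1) + (a-2)*(b-2) + 1"
  have main: "mono_cyc N c 1 a \<or> mono_cyc N c 2 b" if tc: "two_coloring N c" for c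
  proof (rule ccontr)
    assume "\<not> (mono_cyc N c 1 a \<or> mono_cyc N c 2 b)"
    then have n1: "\<not> mono_cyc N c 1 a" and n2: "\<not> mono_cyc N c 2 b" by auto
    have col: "c {u,v} = 1 \<or> c {u,v} = 2" if "u < N" "v < N" "u \<noteq> v" for u v
    proof -
      have "{u,v} \<in> Kedges N" unfolding Kedges_def using that by blast
      then show ?thesis using tc unfolding two_coloring_def by auto
    qed
    define R where "R = {v. 0 < v \<and> v < N \<and> c {0,v} = 1}"
    define B where "B = {v. 0 < v \<and> v < N \<and> c {0,v} = 2}"
    have fR: "finite R" unfolding R_def by (rule finite_subset[of _ "{..<N}"]) auto
    have fB: "finite B" unfolding B_def by (rule finite_subset[of _ "{..<N}"]) auto
    have cR: "card R \<le> (a - 1 - 1) * (b - 1)"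
    proof (rule path_bound[where j=1 and j'=2])
      show "finite R" by (rule fR)
      show "\<forall>u\<in>R. \<forall>v\<in>R. u \<noteq> v \<longrightarrow> c {u,v} = 1 \<or> c {u,v} = 2"
        using col unfolding R_def by blast
      show "\<not> (\<exists>y. (\<forall>i<a - 1. y i \<in> R) \<and> (\<forall>i. Suc i < a - 1 \<longrightarrow> y i < y (Suc i) \<and> c {y i, y (Suc i)} = 1))"
      proof
        assume "\<exists>y. (\<forall>i<a - 1. y i \<in> R) \<and> (\<forall>i. Suc i < a - 1 \<longrightarrow> y i < y (Suc i) \<and> c {y i, y (Suc i)} = 1)"
        then obtain y where "\<forall>i<a - 1. y i \<in> R" "\<forall>i. Suc i < a - 1 \<longrightarrow> y i < y (Suc i) \<and> c {y i, y (Suc i)} = 1"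
          by blast
        moreover have "R \<subseteq> {v. 0 < v \<and> v < N \<and> c {0, v} = 1}" unfolding R_def by blast
        moreover have "a - 1 \<ge> 1" using a by simp
        ultimately have "mono_cyc N c 1 (Suc (a - 1))" by (intro path_to_cyc) auto
        then show False using n1 a by (simp add: Suc_diff_le)
      qed
      show "\<forall>S\<subseteq>R. (\<forall>u\<in>S. \<forall>v\<in>S. u \<noteq> v \<longrightarrow> c {u,v} = 2) \<longrightarrow> card S < b"
      proof (intro allI impI)
        fix S assume S1: "S \<subseteq> R" and S2: "\<forall>u\<in>S. \<forall>v\<in>S. u \<noteq> v \<longrightarrow> c {u,v} = 2"
        show "card S < b"
        proof (rule ccontr)
          assume "\<not> card S < b"
          then have "card S \<ge> b" by simp
          moreover have "finite S" using S1 fR finite_subset by blast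
          moreover have "S \<subseteq> {0..<N}" using S1 unfolding R_def by auto
          ultimately have "mono_cyc N c 2 b" using clique_cyc[of S b N c 2] S2 b by blast
          then show False using n2 by simp
        qed
      qed
    qed
    have cB: "card B \<le> (b - 1 - 1) * (a - 1)"
    proof (rule path_bound[where j=2 and j'=1])
      show "finite B" by (rule fB)
      show "\<forall>u\<in>B. \<forall>v\<in>B. u \<noteq> v \<longrightarrow> c {u,v} = 2 \<or> c {u,v} = 1"
        using col unfolding B_def by blast
      show "\<not> (\<exists>y. (\<forall>i<b - 1. y i \<in> B) \<and> (\<forall>i. Suc i < b - 1 \<longrightarrow> y i < y (Suc i) \<and> c {y i, y (Suc i)} = 2))"
      proof
        assume "\<exists>y. (\<forall>i<b - 1. y i \<in> B) \<and> (\<forall>i. Suc i < b - 1 \<longrightarrow> y i < y (Suc i) \<and> c {y i, y (Suc i)} = 2)"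
        then obtain y where "\<forall>i<b - 1. y i \<in> B" "\<forall>i. Suc i < b - 1 \<longrightarrow> y i < y (Suc i) \<and> c {y i, y (Suc i)} = 2"
          by blast
        moreover have "B \<subseteq> {v. 0 < v \<and> v < N \<and> c {0, v} = 2}" unfolding B_def by blast
        moreover have "b - 1 \<ge> 1" using b by simp
        ultimately have "mono_cyc N c 2 (Suc (b - 1))" by (intro path_to_cyc) auto
        then show False using n2 b by (simp add: Suc_diff_le)
      qed
      show "\<forall>S\<subseteq>B. (\<forall>u\<in>S. \<forall>v\<in>S. u \<noteq> v \<longrightarrow> c {u,v} = 1) \<longrightarrow> card S < a"
      proof (intro allI impI)
        fix S assume S1: "S \<subseteq> B" and S2: "\<forall>u\<in>S. \<forall>v\<in>S. u \<noteq> v \<longrightarrow> c {u,v} = 1"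
        show "card S < a"
        proof (rule ccontr)
          assume "\<not> card S < a"
          then have "card S \<ge> a" by simp
          moreover have "finite S" using S1 fB finite_subset by blast
          moreover have "S \<subseteq> {0..<N}" using S1 unfolding B_def by auto
          ultimately have "mono_cyc N c 1 a" using clique_cyc[of S a N c 1] S2 a by blast
          then show False using n1 by simp
        qed
      qed
    qed
    have "{1..<N} \<subseteq> R \<union> B"
    proof
      fix v assume "v \<in> {1..<N}"
      then have "0 < v" "v < N" by auto
      then show "v \<in> R \<union> B" using col[of 0 v] unfolding R_def B_def by auto
    qed
    then have "card {1..<N} \<le> card (R \<union> B)" using fR fB by (intro card_mono) auto
    also have "\<dots> \<le> card R + card B" by (rule card_Un_le)
    finally have "N - 1 \<le> (a - 1 - 1) * (b - 1) + (b - 1 - 1) * (a - 1)" using cR cB by simp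
    moreover obtain a' b' where "a = a' + 2" "b = b' + 2" using a b
      by (metis add.commute le_Suc_ex)
    ultimately show False unfolding N_def by (simp add: algebra_simps)
  qed
  show ?thesis unfolding cyc_arrows_def N_def[symmetric]
  proof (intro allI impI)
    fix c assume "two_coloring N c"
    then have "mono_cyc N c 1 a \<or> mono_cyc N c 2 b" by (rule main)
    then show "(\<exists>\<phi>. embedding N c 1 (C_mon a) \<phi> \<and> cyc_increasing (C_mon a) \<phi>) \<or>
               (\<exists>\<phi>. embedding N c 2 (C_mon b) \<phi> \<and> cyc_increasing (C_mon b) \<phi>)"
      using cyc_to_emb a b by blast
  qed
qed


theorem corollary4p11:
  fixes a b :: nat
  assumes "a \<ge> 2" and "b \<ge> 2"
  shows "int (R_cyc (C_mon a) (C_mon b)) = 2 * int a * int b - 3 * int a - 3 * int b + 6"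
proof -
  have R: "R_cyc (C_mon a) (C_mon b) = (a-1)*(b-1) + (a-2)*(b-2) + 1"
    unfolding R_cyc_def
  proof (rule Least_equality)
    show "cyc_arrows ((a-1)*(b-1) + (a-2)*(b-2) + 1) (C_mon a) (C_mon b)"
      using upper assms by blast
  next
    fix m assume m: "cyc_arrows m (C_mon a) (C_mon b)"
    show "(a-1)*(b-1) + (a-2)*(b-2) + 1 \<le> m"
    proof (rule ccontr)
      assume "\<not> (a-1)*(b-1) + (a-2)*(b-2) + 1 \<le> m"
      then have "m \<le> NB a b + (a - 2) * (b - 2)" unfolding NB_def by simp
      then show False using lower[OF assms] m by blast
    qed
  qed
  obtain a' b' where ab: "a = a' + 2" "b = b' + 2" using assms
    by (metis add.commute le_Suc_ex)
  have "int ((a-1)*(b-1) + (a-2)*(b-2) + 1) = 2 * int a * int b - 3 * int a - 3 * int b + 6"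
    unfolding ab by (simp add: algebra_simps)
  then show ?thesis using R by simp
qed

end
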